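(* Under the assumptions of the explicit-formulae proposition (piecewise linear concave non-positive increasing $v$ on grid $x_1<\dots<x_N$, $-\infty$ below $x_1$ and constant above $x_N$; $u$ concave increasing with $u^\dagger$ continuous on $(0,\infty)$ and $\lim_{p\to0}u^\dagger(p)=\infty$; $s\in(0,1)$), $\lim_{\eta\to0}X^\eta=\infty$.
   Context: $\Phi$ is the standard normal distribution function, $M=|\mu-r|\sqrt{\delta t}/\sigma$, $Q(x)=\Phi(M+\Phi^{-1}(x))$, $q^A_{BS}=Q'$. For concave increasing $g$, $g^\dagger(p)=\inf\{x:p\in\partial g(x)\}$, $\partial g$ the superdifferential. $C\in\{0,1\}$. For $\eta>0$: $f^\eta(x)=v^\dagger(\eta s^{C-1}e^{-r\delta t}q^A_{BS}(x))$, $\gamma^\eta=u^\dagger\big(-\frac{\eta}{\delta t}\big(-1+s\int_0^1(1+v(f^\eta(x)))\mathrm dx\big)^{-1}\big)$, $X^\eta=\gamma^\eta+s^C\int_0^1e^{-r\delta t}q^A_{BS}(x)f^\eta(x)\mathrm dx$. *)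

theory Defs
  imports "HOL-Probability.Probability"
begin

definition Phi :: "real \<Rightarrow> real" where
  "Phi x = (LINT t:{..x}|lborel. std_normal_density t)"

definition Phi_inv :: "real \<Rightarrow> real" where
  "Phi_inv p = (THE x. Phi x = p)"

definition QBS :: "real \<Rightarrow> real \<Rightarrow> real" where
  "QBS M x = Phi (M + Phi_inv x)"

definition qBS :: "real \<Rightarrow> real \<Rightarrow> real" where
  "qBS M x = deriv (QBS M) x"

text \<open>Superdifferential of a concave function with effective domain D
  (the function is -infinity outside D), and the generalised inverse g^dagger.\<close>
definition superdiff_on :: "real set \<Rightarrow> (real \<Rightarrow> real) \<Rightarrow> real \<Rightarrow> real set" where
  "superdiff_on D g x = {p. \<forall>y\<in>D. g y \<le> g x + p * (y - x)}"

definition dagger_on :: "real set \<Rightarrow> (real \<Rightarrow> real) \<Rightarrow> real \<Rightarrow> real" where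
  "dagger_on D g p = Inf {x\<in>D. p \<in> superdiff_on D g x}"

definition f_eta :: "(real \<Rightarrow> real) \<Rightarrow> real \<Rightarrow> real \<Rightarrow> nat \<Rightarrow> real \<Rightarrow> real \<Rightarrow> real \<Rightarrow> real \<Rightarrow> real \<Rightarrow> real" where
  "f_eta v x1 s C r dt M \<eta> x =
     dagger_on {x1..} v (\<eta> * s powr (real C - 1) * exp (- r * dt) * qBS M x)"

definition gamma_eta :: "(real \<Rightarrow> real) \<Rightarrow> (real \<Rightarrow> real) \<Rightarrow> real \<Rightarrow> real \<Rightarrow> nat \<Rightarrow> real \<Rightarrow> real \<Rightarrow> real \<Rightarrow> real \<Rightarrow> real" where
  "gamma_eta u v x1 s C r dt M \<eta> =
     dagger_on UNIV u (- (\<eta> / dt) *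
        inverse (-1 + s * (LBINT x=0..1. 1 + v (f_eta v x1 s C r dt M \<eta> x))))"

definition X_eta :: "(real \<Rightarrow> real) \<Rightarrow> (real \<Rightarrow> real) \<Rightarrow> real \<Rightarrow> real \<Rightarrow> nat \<Rightarrow> real \<Rightarrow> real \<Rightarrow> real \<Rightarrow> real \<Rightarrow> real" where
  "X_eta u v x1 s C r dt M \<eta> =
     gamma_eta u v x1 s C r dt M \<eta>
     + s ^ C * (LBINT x=0..1. exp (- r * dt) * qBS M x * f_eta v x1 s C r dt M \<eta> x)"

end

theory Submission
  imports Defs
begin



abbreviation "dd \<equiv> std_normal_density"

lemma dd_pos: "0 < dd x" by (rule normal_density_pos) simp

lemma dd_cont: "isCont dd x"
  unfolding normal_density_def by (intro continuous_intros) auto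

lemma Phi_alt: "Phi x = (\<integral>t. indicator {..x} t * dd t \<partial>lborel)"
  unfolding Phi_def set_lebesgue_integral_def by simp

lemma Phi_int: "integrable lborel (\<lambda>t. indicator {..x} t * dd t)"
  using integrable_mult_indicator[of "{..x}" lborel dd] by simp

lemma Phi_nonneg: "0 \<le> Phi x"
  unfolding Phi_alt by (rule integral_nonneg_AE) (auto split: split_indicator)

lemma Phi_le1: "Phi x \<le> 1"
proof -
  have "Phi x \<le> (\<integral>t. dd t \<partial>lborel)"
    unfolding Phi_alt by (rule integral_mono[OF Phi_int]) (auto split: split_indicator)
  then show ?thesis by simp
qed

lemma Phi_top: "(Phi \<longlongrightarrow> 1) at_top"
proof (rule tendsto_at_topI_sequentially)
  fix X :: "nat \<Rightarrow> real" assume X: "filterlim X at_top sequentially"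
  have "(\<lambda>n. \<integral>t. indicator {..X n} t * dd t \<partial>lborel) \<longlonglongrightarrow> (\<integral>t. dd t \<partial>lborel)"
  proof (rule integral_dominated_convergence[where w=dd])
    show "AE t in lborel. (\<lambda>n. indicator {..X n} t * dd t) \<longlonglongrightarrow> dd t"
    proof
      fix t
      have "eventually (\<lambda>n. t \<le> X n) sequentially"
        using X unfolding filterlim_at_top by auto
      then show "(\<lambda>n. indicator {..X n} t * dd t) \<longlonglongrightarrow> dd t"
        by (intro tendsto_eventually) (auto elim!: eventually_mono split: split_indicator)
    qed
  qed (auto split: split_indicator)
  then show "(\<lambda>n. Phi (X n)) \<longlonglongrightarrow> 1" by (simp add: Phi_alt)
qed

lemma Phi_bot: "(Phi \<longlongrightarrow> 0) at_bot"
proof (rule tendsto_at_botI_sequentially)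
  fix X :: "nat \<Rightarrow> real" assume X: "filterlim X at_bot sequentially"
  have "(\<lambda>n. \<integral>t. indicator {..X n} t * dd t \<partial>lborel) \<longlonglongrightarrow> integral\<^sup>L lborel (\<lambda>t::real. 0::real)"
  proof (rule integral_dominated_convergence[where w=dd and f="\<lambda>t. 0"])
    show "AE t in lborel. (\<lambda>n. indicator {..X n} t * dd t) \<longlonglongrightarrow> 0"
    proof
      fix t
      have "eventually (\<lambda>n. X n < t) sequentially"
        using X unfolding filterlim_at_bot_dense by auto
      then show "(\<lambda>n. indicator {..X n} t * dd t) \<longlonglongrightarrow> 0"
        by (intro tendsto_eventually) (auto elim!: eventually_mono split: split_indicator)
    qed
  qed (auto split: split_indicator)
  then show "(\<lambda>n. Phi (X n)) \<longlonglongrightarrow> 0" by (simp add: Phi_alt)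
qed

lemma Phi_split: "Phi u = Phi 0 + (LBINT t=0..u. dd t)"
proof (cases "0 \<le> u")
  case True
  have "Phi u = (LINT t:{..0}\<union>{0<..u}|lborel. dd t)"
    unfolding Phi_def using True by (intro arg_cong[where f="\<lambda>A. set_lebesgue_integral lborel A dd"]) auto
  also have "\<dots> = Phi 0 + (LINT t:{0<..u}|lborel. dd t)"
    unfolding Phi_def
    using integrable_mult_indicator[of "{..0}" lborel dd] integrable_mult_indicator[of "{0<..u}" lborel dd]
    by (intro set_integral_Un) (auto simp: set_integrable_def)
  finally show ?thesis using True interval_integral_Ioc[of 0 u dd] by (simp add: zero_ereal_def)
next
  case False
  have "Phi 0 = (LINT t:{..u}\<union>{u<..0}|lborel. dd t)"
    unfolding Phi_def using False by (intro arg_cong[where f="\<lambda>A. set_lebesgue_integral lborel A dd"]) auto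
  also have "\<dots> = Phi u + (LINT t:{u<..0}|lborel. dd t)"
    unfolding Phi_def
    using integrable_mult_indicator[of "{..u}" lborel dd] integrable_mult_indicator[of "{u<..0}" lborel dd]
    by (intro set_integral_Un) (auto simp: set_integrable_def)
  finally show ?thesis using False
    using interval_integral_Ioc[of u 0 dd] interval_integral_endpoints_reverse[of 0 u dd]
    by (simp add: zero_ereal_def)
qed

lemma Phi_deriv: "DERIV Phi x :> dd x"
proof -
  define a where "a = min 0 x - 1"
  define b where "b = max 0 x + 1"
  have "((\<lambda>u. LBINT y=ereal 0..u. dd y) has_vector_derivative (dd x)) (at x within {a..b})"
    by (rule interval_integral_FTC2[of a 0 b dd x]) (auto simp: a_def b_def intro!: continuous_at_imp_continuous_on dd_cont)
  then have "((\<lambda>u. LBINT y=0..u. dd y) has_field_derivative (dd x)) (at x)"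
    using at_within_Icc_at[of a x b]
    by (simp add: has_real_derivative_iff_has_vector_derivative a_def b_def zero_ereal_def)
  then have "((\<lambda>u. Phi 0 + (LBINT y=0..u. dd y)) has_field_derivative (dd x)) (at x)"
    by (auto intro!: derivative_eq_intros)
  then show ?thesis using Phi_split by (metis (no_types) ext)
qed

lemma Phi_cont: "isCont Phi x" using Phi_deriv DERIV_isCont by blast

lemma Phi_less: "x < y \<Longrightarrow> Phi x < Phi y"
  by (rule DERIV_pos_imp_increasing) (auto intro: Phi_deriv dd_pos)

lemma Phi_pos: "0 < Phi x" using Phi_less[of "x-1" x] Phi_nonneg[of "x-1"] by simp
lemma Phi_lt1: "Phi x < 1" using Phi_less[of x "x+1"] Phi_le1[of "x+1"] by simp

lemma Phi_surj: assumes "0 < p" "p < 1" shows "\<exists>x. Phi x = p"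
proof -
  have "eventually (\<lambda>x. Phi x < p) at_bot" using order_tendstoD(2)[OF Phi_bot assms(1)] .
  then obtain a where a: "Phi a < p" by (auto simp: eventually_at_bot_linorder)
  have "eventually (\<lambda>x. p < Phi x) at_top" using order_tendstoD(1)[OF Phi_top assms(2)] .
  then obtain b where b: "p < Phi b" by (auto simp: eventually_at_top_linorder)
  have "a \<le> b" using a b Phi_less[of b a] by (cases "a \<le> b") auto
  from IVT'[of Phi a p b] a b this show ?thesis
    using continuous_at_imp_continuous_on Phi_cont by (metis less_imp_le)
qed

lemma Phi_inj: "Phi x = Phi y \<Longrightarrow> x = y"
  using Phi_less[of x y] Phi_less[of y x] by (cases x y rule: linorder_cases) auto

lemma Phi_Phi_inv: "0 < p \<Longrightarrow> p < 1 \<Longrightarrow> Phi (Phi_inv p) = p"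
  unfolding Phi_inv_def using Phi_surj Phi_inj by (metis (mono_tags) theI)

lemma Phi_inv_Phi: "Phi_inv (Phi x) = x"
  unfolding Phi_inv_def using Phi_inj by blast




lemma Phi_mono: "a \<le> b \<Longrightarrow> Phi a \<le> Phi b"
  using Phi_less[of a b] by (cases "a = b") auto

lemma P_cont: assumes "0 < p" "p < 1" shows "isCont Phi_inv p"
proof -
  have "isCont Phi_inv (Phi (Phi_inv p))"
    by (rule isCont_inverse_function[of 1]) (auto simp: Phi_inv_Phi Phi_cont)
  then show ?thesis using Phi_Phi_inv[OF assms] by simp
qed

lemma P_deriv: assumes "0 < p" "p < 1" shows "DERIV Phi_inv p :> inverse (dd (Phi_inv p))"
  by (rule DERIV_inverse_function[of Phi _ _ _ 0 1])
     (use assms dd_pos[of "Phi_inv p"] in \<open>auto intro: Phi_deriv Phi_Phi_inv P_cont\<close>)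

definition qf :: "real \<Rightarrow> real \<Rightarrow> real" where
  "qf M x = dd (M + Phi_inv x) * inverse (dd (Phi_inv x))"

lemma qf_pos: "0 < qf M x"
  unfolding qf_def using dd_pos by simp

lemma QBS_deriv: assumes "0 < x" "x < 1" shows "DERIV (QBS M) x :> qf M x"
proof -
  have "DERIV (\<lambda>x. M + Phi_inv x) x :> inverse (dd (Phi_inv x))"
    using P_deriv[OF assms] by (auto intro!: derivative_eq_intros)
  from DERIV_chain2[OF Phi_deriv this] show ?thesis
    unfolding qf_def by (simp add: QBS_def[abs_def])
qed

lemma qBS_eq: "0 < x \<Longrightarrow> x < 1 \<Longrightarrow> qBS M x = qf M x"
  unfolding qBS_def using QBS_deriv DERIV_imp_deriv by blast

lemma qf_cont: assumes "0 < x" "x < 1" shows "isCont (qf M) x"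
proof -
  have c: "isCont Phi_inv x" using P_cont assms .
  have "isCont (\<lambda>x. dd (M + Phi_inv x)) x"
    by (rule isCont_o2[OF _ dd_cont]) (intro continuous_intros c)
  moreover have "isCont (\<lambda>x. dd (Phi_inv x)) x"
    by (rule isCont_o2[OF c dd_cont])
  ultimately show ?thesis unfolding qf_def
    using dd_pos[of "Phi_inv x"] by (intro continuous_intros) auto
qed

lemma P_bot: "filterlim (\<lambda>x. c + Phi_inv x) at_bot (at_right 0)"
  unfolding filterlim_at_bot
proof
  fix Z
  have "eventually (\<lambda>x. x \<in> {0<..<Phi (Z - c)}) (at_right 0)"
    by (rule eventually_at_right_real) (rule Phi_pos)
  then show "eventually (\<lambda>x. c + Phi_inv x \<le> Z) (at_right 0)"
  proof (rule eventually_mono)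
    fix x assume x: "x \<in> {0<..<Phi (Z - c)}"
    then have "x < 1" using Phi_lt1[of "Z-c"] by simp
    then have "Phi (Phi_inv x) < Phi (Z - c)" using x Phi_Phi_inv by simp
    then have "Phi_inv x < Z - c" using Phi_mono[of "Z - c" "Phi_inv x"] by linarith
    then show "c + Phi_inv x \<le> Z" by simp
  qed
qed

lemma P_top: "filterlim (\<lambda>x. c + Phi_inv x) at_top (at_left 1)"
  unfolding filterlim_at_top
proof
  fix Z
  have "eventually (\<lambda>x. x \<in> {Phi (Z - c)<..<1}) (at_left 1)"
    by (rule eventually_at_left_real) (rule Phi_lt1)
  then show "eventually (\<lambda>x. Z \<le> c + Phi_inv x) (at_left 1)"
  proof (rule eventually_mono)
    fix x assume x: "x \<in> {Phi (Z - c)<..<1}"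
    then have "0 < x" using Phi_pos[of "Z-c"] by simp
    then have "Phi (Z - c) < Phi (Phi_inv x)" using x Phi_Phi_inv by simp
    then have "Z - c < Phi_inv x" using Phi_mono[of "Phi_inv x" "Z - c"] by linarith
    then show "Z \<le> c + Phi_inv x" by simp
  qed
qed

lemma qf_integrable: "set_integrable lborel {0<..<1} (qf M)"
proof -
  have Qa: "(QBS M \<longlongrightarrow> 0) (at_right 0)"
    unfolding QBS_def[abs_def] using filterlim_compose[OF Phi_bot P_bot[of M]] by simp
  have Qb: "(QBS M \<longlongrightarrow> 1) (at_left 1)"
    unfolding QBS_def[abs_def] using filterlim_compose[OF Phi_top P_top[of M]] by simp
  have A: "((QBS M \<circ> real_of_ereal) \<longlongrightarrow> 0) (at_right (ereal 0))"
    unfolding at_right_ereal tendsto_compose_filtermap[symmetric] using Qa by (simp add: comp_def)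
  have B: "((QBS M \<circ> real_of_ereal) \<longlongrightarrow> 1) (at_left (ereal 1))"
    unfolding at_left_ereal tendsto_compose_filtermap[symmetric] using Qb by (simp add: comp_def)
  have "set_integrable lborel (einterval (ereal 0) (ereal 1)) (qf M)"
    by (rule interval_integral_FTC_nonneg[OF _ _ _ _ A B])
       (auto intro: QBS_deriv qf_cont less_imp_le[OF qf_pos])
  then show ?thesis by simp
qed




lemma dagger_ge:
  fixes v :: "real \<Rightarrow> real"
  assumes ab: "a \<le> b" and cont: "continuous_on {a..b} v" and const: "\<forall>y\<ge>b. v y = v b" and p: "0 \<le> p"
  shows "a \<le> dagger_on {a..} v p"
proof -
  have c2: "continuous_on {a..b} (\<lambda>y. v y - p*y)" by (intro continuous_intros cont)
  have "\<exists>x\<in>{a..b}. \<forall>y\<in>{a..b}. v y - p*y \<le> v x - p*x"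
    by (rule continuous_attains_sup[OF compact_Icc _ c2]) (use ab in simp)
  then obtain z where z: "z \<in> {a..b}" "\<forall>y\<in>{a..b}. v y - p*y \<le> v z - p*z"
    by blast
  have key: "\<forall>y\<in>{a..}. v y \<le> v z + p*(y-z)"
  proof
    fix y assume y: "y \<in> {a..}"
    show "v y \<le> v z + p*(y-z)"
    proof (cases "y \<le> b")
      case True
      then have "y \<in> {a..b}" using y by simp
      then have "v y - p*y \<le> v z - p*z" using z(2) by blast
      then show ?thesis by (simp add: right_diff_distrib)
    next
      case False
      then have "v y = v b" using const[rule_format, of y] by linarith
      moreover have "b \<in> {a..b}" using ab by simp
      then have "v b - p*b \<le> v z - p*z" using z(2) by blast
      moreover have "p*b \<le> p*y" using False p by (intro mult_left_mono) auto
      ultimately show ?thesis by (simp add: right_diff_distrib)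
    qed
  qed
  have "p \<in> superdiff_on {a..} v z" unfolding superdiff_on_def using key by blast
  then have zin: "z \<in> {x\<in>{a..}. p \<in> superdiff_on {a..} v x}"
    using z(1) by simp
  show ?thesis unfolding dagger_on_def
    by (rule cInf_greatest) (use zin in blast, simp)
qed
lemma LB01: "(LBINT x=0..1. g x) = set_lebesgue_integral lborel {0<..<1} g"
  by (simp add: interval_lebesgue_integral_def zero_ereal_def one_ereal_def)

lemma LB_le:
  fixes g h :: "real \<Rightarrow> real"
  assumes "set_integrable lborel {0<..<1} h" "\<And>x. x \<in> {0<..<1} \<Longrightarrow> g x \<le> h x"
  shows "(LBINT x=0..1. g x) \<le> max 0 (LBINT x=0..1. h x)"
proof (cases "set_integrable lborel {0<..<1} g")
  case True
  then show ?thesis unfolding LB01 using set_integral_mono[OF True assms] by simp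
next
  case False
  then show ?thesis unfolding LB01 set_lebesgue_integral_def set_integrable_def
    by (simp add: not_integrable_integral_eq)
qed

lemma LB_ge:
  fixes g h :: "real \<Rightarrow> real"
  assumes "set_integrable lborel {0<..<1} h" "\<And>x. x \<in> {0<..<1} \<Longrightarrow> h x \<le> g x"
  shows "min 0 (LBINT x=0..1. h x) \<le> (LBINT x=0..1. g x)"
proof (cases "set_integrable lborel {0<..<1} g")
  case True
  then show ?thesis unfolding LB01 using set_integral_mono[OF assms(1) True assms(2)] by simp
next
  case False
  then show ?thesis unfolding LB01 set_lebesgue_integral_def set_integrable_def
    by (simp add: not_integrable_integral_eq)
qed

lemma LB_one: "(LBINT x=0..1. (1::real)) = 1"
  using interval_integral_const(2)[of 0 1 1] by (simp add: zero_ereal_def one_ereal_def)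

lemma one_int: "set_integrable lborel {0<..<1} (\<lambda>x::real. 1::real)"
  using interval_integral_const(1)[of 0 1 1]
  by (simp add: interval_lebesgue_integrable_def zero_ereal_def one_ereal_def)




lemma xs_mono_aux:
  fixes xs :: "nat \<Rightarrow> real"
  assumes grid: "\<forall>i\<in>{1..<N}. xs i < xs (Suc i)"
  shows "1 \<le> i \<Longrightarrow> i \<le> j \<Longrightarrow> j \<le> N \<Longrightarrow> xs i \<le> xs j"
proof (induction j)
  case 0 then show ?case by simp
next
  case (Suc j)
  show ?case
  proof (cases "i = Suc j")
    case True then show ?thesis by simp
  next
    case False
    then have "i \<le> j" using Suc.prems by simp
    then have "xs i \<le> xs j" using Suc by simp
    moreover have "j \<in> {1..<N}" using Suc.prems \<open>i \<le> j\<close> by simp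
    then have "xs j < xs (Suc j)" using grid by blast
    ultimately show ?thesis by simp
  qed
qed

theorem mainTheorem9:
  fixes u v :: "real \<Rightarrow> real" and xs :: "nat \<Rightarrow> real" and N C :: nat
    and s r mu sigma dt :: real
  assumes N: "N \<ge> 1"
    and grid: "\<forall>i\<in>{1..<N}. xs i < xs (Suc i)"
    and v_lin: "\<forall>i\<in>{1..<N}. \<forall>x\<in>{xs i..xs (Suc i)}.
                 v x = v (xs i) + (v (xs (Suc i)) - v (xs i)) / (xs (Suc i) - xs i) * (x - xs i)"
    and v_const: "\<forall>x\<ge>xs N. v x = v (xs N)"
    and v_concave: "concave_on {xs 1..} v"
    and v_nonpos: "\<forall>x\<ge>xs 1. v x \<le> 0"
    and v_mono: "mono_on {xs 1..} v"
    and u_concave: "concave_on UNIV u"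
    and u_mono: "mono u"
    and u_dag_cont: "continuous_on {0<..} (dagger_on UNIV u)"
    and u_dag_lim: "filterlim (dagger_on UNIV u) at_top (at_right 0)"
    and s: "0 < s" "s < 1"
    and C: "C \<in> {0, 1}"
    and sigma: "sigma > 0" and dt: "dt > 0"
  shows "filterlim
           (\<lambda>\<eta>. X_eta u v (xs 1) s C r dt (\<bar>mu - r\<bar> * sqrt dt / sigma) \<eta>)
           at_top (at_right 0)"
proof -
  define M0 where "M0 = \<bar>mu - r\<bar> * sqrt dt / sigma"
  define F where "F = (\<lambda>\<eta> x. f_eta v (xs 1) s C r dt M0 \<eta> x)"
  define I where "I = (\<lambda>\<eta>. LBINT x=0..1. 1 + v (F \<eta> x))"
  define J where "J = (\<lambda>\<eta>. LBINT x=0..1. exp (- r * dt) * qBS M0 x * F \<eta> x)"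
  define A where "A = (\<lambda>\<eta>. - (\<eta> / dt) * inverse (-1 + s * I \<eta>))"
  define c0 where "c0 = exp (- r * dt)"
  define m where "m = min 0 (xs 1)"
  define K where "K = min 0 (LBINT x=0..1. c0 * m * qf M0 x)"
  have X_eq: "X_eta u v (xs 1) s C r dt M0 \<eta> = dagger_on UNIV u (A \<eta>) + s ^ C * J \<eta>" for \<eta>
    unfolding X_eta_def gamma_eta_def A_def I_def J_def F_def by simp
  have x1N: "xs 1 \<le> xs N" using xs_mono_aux[OF grid, of 1 N] N by simp
  have vcont: "continuous_on {xs 1..xs N} v"
  proof (cases "N = 1")
    case True then show ?thesis by simp
  next
    case False
    then have N2: "2 \<le> N" using N by simp
    have one: "(1::nat) \<in> {1..<N}" using N2 by simp
    have x12: "xs 1 < xs 2" using grid one by (simp add: numeral_2_eq_2)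
    have x2N: "xs 2 \<le> xs N" using xs_mono_aux[OF grid, of 2 N] N2 by simp
    define m2 where "m2 = (xs 1 + xs 2) / 2"
    have c1: "continuous_on {xs 1..xs 2} v"
    proof -
      have "continuous_on {xs 1..xs 2}
             (\<lambda>x. v (xs 1) + (v (xs (Suc 1)) - v (xs 1)) / (xs (Suc 1) - xs 1) * (x - xs 1))"
        by (intro continuous_intros)
      moreover have "\<And>x. x \<in> {xs 1..xs 2} \<Longrightarrow>
          v x = v (xs 1) + (v (xs (Suc 1)) - v (xs 1)) / (xs (Suc 1) - xs 1) * (x - xs 1)"
        using v_lin one by (simp add: numeral_2_eq_2)
      ultimately show ?thesis using continuous_on_cong by (metis (no_types, lifting))
    qed
    have "convex_on {xs 1<..} (\<lambda>x. - v x)"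
      using v_concave unfolding concave_on_def by (rule convex_on_subset) auto
    then have "continuous_on {xs 1<..} (\<lambda>x. - v x)"
      by (intro convex_on_continuous) auto
    then have "continuous_on {xs 1<..} (\<lambda>x. - (- v x))"
      by (rule continuous_on_minus)
    then have "continuous_on {xs 1<..} v" by simp
    then have c2: "continuous_on {m2..xs N} v"
      by (rule continuous_on_subset) (use x12 in \<open>auto simp: m2_def\<close>)
    have "continuous_on ({xs 1..xs 2} \<union> {m2..xs N}) v"
      by (rule continuous_on_closed_Un[OF _ _ c1 c2]) auto
    moreover have "{xs 1..xs 2} \<union> {m2..xs N} = {xs 1..xs N}"
      using x12 x2N by (auto simp: m2_def)
    ultimately show ?thesis by simp
  qed
  have Fge: "xs 1 \<le> F \<eta> x" if "0 < \<eta>" "x \<in> {0<..<1}" for \<eta> x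
  proof -
    have "0 < qBS M0 x" using qBS_eq[of x M0] qf_pos[of M0 x] that by simp
    then have "0 \<le> \<eta> * s powr (real C - 1) * exp (- r * dt) * qBS M0 x"
      using that s by (intro mult_nonneg_nonneg) auto
    from dagger_ge[OF x1N vcont v_const this] show ?thesis
      unfolding F_def f_eta_def .
  qed
  have Ile: "I \<eta> \<le> 1" if "0 < \<eta>" for \<eta>
  proof -
    have "I \<eta> \<le> max 0 (LBINT x=0..1. (1::real))"
      unfolding I_def
    proof (rule LB_le[OF one_int])
      fix x :: real assume "x \<in> {0<..<1}"
      then have "xs 1 \<le> F \<eta> x" using Fge that by blast
      then show "1 + v (F \<eta> x) \<le> 1" using v_nonpos by simp
    qed
    then show ?thesis by (simp add: LB_one)
  qed
  have hint: "set_integrable lborel {0<..<1} (\<lambda>x. c0 * m * qf M0 x)"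
    using qf_integrable[of M0] by (intro set_integrable_mult_right) auto
  have Jge: "K \<le> J \<eta>" if "0 < \<eta>" for \<eta>
    unfolding K_def J_def
  proof (rule LB_ge[OF hint])
    fix x :: real assume x: "x \<in> {0<..<1}"
    then have "xs 1 \<le> F \<eta> x" using Fge that by blast
    then have "m \<le> F \<eta> x" by (simp add: m_def)
    moreover have "0 \<le> c0 * qf M0 x" using qf_pos[of M0 x] by (simp add: c0_def)
    ultimately have "(c0 * qf M0 x) * m \<le> (c0 * qf M0 x) * F \<eta> x"
      by (intro mult_left_mono)
    moreover have "qBS M0 x = qf M0 x" using qBS_eq x by simp
    ultimately show "c0 * m * qf M0 x \<le> exp (- r * dt) * qBS M0 x * F \<eta> x"
      by (simp add: c0_def ac_simps)
  qed
  have Abnd: "0 < A \<eta> \<and> A \<eta> \<le> \<eta> / (dt * (1 - s))" if "0 < \<eta>" for \<eta>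
  proof -
    define w where "w = 1 - s * I \<eta>"
    have "s * I \<eta> \<le> s * 1" using Ile[OF that] s by (intro mult_left_mono) auto
    then have w: "1 - s \<le> w" by (simp add: w_def)
    then have wpos: "0 < w" using s by simp
    have Aeq: "A \<eta> = (\<eta> / dt) / w"
    proof -
      have "-1 + s * I \<eta> = - w" by (simp add: w_def)
      then show ?thesis unfolding A_def by (simp add: divide_inverse)
    qed
    have "0 < A \<eta>" using Aeq wpos that dt by simp
    moreover have "(\<eta> / dt) / w \<le> (\<eta> / dt) / (1 - s)"
      using w s that dt by (intro divide_left_mono) auto
    then have "A \<eta> \<le> \<eta> / (dt * (1 - s))" using Aeq by simp
    ultimately show ?thesis by simp
  qed
  have evpos: "eventually (\<lambda>\<eta>::real. 0 < \<eta>) (at_right 0)"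
    using eventually_at_right_real[of 0 1] by (auto elim: eventually_mono)
  have Alim: "filterlim A (at_right 0) (at_right 0)"
    unfolding filterlim_at
  proof
    show "eventually (\<lambda>\<eta>. A \<eta> \<in> {0<..} \<and> A \<eta> \<noteq> 0) (at_right 0)"
      using evpos by (auto elim!: eventually_mono dest: Abnd)
    have "((\<lambda>\<eta>. \<eta> / (dt * (1 - s))) \<longlongrightarrow> 0 / (dt * (1 - s))) (at_right 0)"
      using dt s by (intro tendsto_intros) auto
    then have up: "((\<lambda>\<eta>. \<eta> / (dt * (1 - s))) \<longlongrightarrow> 0) (at_right 0)" by simp
    show "(A \<longlongrightarrow> 0) (at_right 0)"
      by (rule tendsto_sandwich[OF _ _ tendsto_const up])
         (use evpos in \<open>auto elim!: eventually_mono dest: Abnd intro: less_imp_le\<close>)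
  qed
  have glim: "filterlim (\<lambda>\<eta>. dagger_on UNIV u (A \<eta>)) at_top (at_right 0)"
    using filterlim_compose[OF u_dag_lim Alim] by (simp add: comp_def)
  have glim2: "filterlim (\<lambda>\<eta>. s ^ C * K + dagger_on UNIV u (A \<eta>)) at_top (at_right 0)"
    by (rule filterlim_tendsto_add_at_top[OF tendsto_const glim])
  have "eventually (\<lambda>\<eta>. s ^ C * K + dagger_on UNIV u (A \<eta>) \<le> X_eta u v (xs 1) s C r dt M0 \<eta>) (at_right 0)"
    using evpos
  proof (rule eventually_mono)
    fix \<eta> :: real assume "0 < \<eta>"
    then have "s ^ C * K \<le> s ^ C * J \<eta>" using Jge s by (intro mult_left_mono) auto
    then show "s ^ C * K + dagger_on UNIV u (A \<eta>) \<le> X_eta u v (xs 1) s C r dt M0 \<eta>"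
      unfolding X_eq by simp
  qed
  from filterlim_at_top_mono[OF glim2 this] show ?thesis unfolding M0_def .
qed


end
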